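(* Let $n\ge 3$ and let $\zeta':\mathrm{TVB}_n\to\mathrm{GL}_{n+1}(\mathbb{C})$ be a complex homogeneous local representation of $\mathrm{TVB}_n$. Then $\zeta'$ is equivalent to one of the following seven representations, described by giving $2\times 2$ matrices $S,R,G$ such that $\zeta'(\sigma_i)=L_i(S)$, $\zeta'(\rho_i)=L_i(R)$ for $1\le i\le n-1$ and $\zeta'(\gamma_j)=L_j(G)$ for $1\le j\le n$: \begin{itemize} \item[(1)] $\zeta'_1$: $S=\begin{pmatrix}0&b\\ c&0\end{pmatrix}$, $R=\begin{pmatrix}0&-\frac{\sqrt b}{\sqrt c}\\ -\frac{\sqrt c}{\sqrt b}&0\end{pmatrix}$, $G=\begin{pmatrix}-1&0\\0&1\end{pmatrix}$, where $b,c\in\mathbb{C}^*$. \item[(2)] $\zeta'_2$: $S=\begin{pmatrix}0&b\\ c&0\end{pmatrix}$, $R=\begin{pmatrix}0&\frac{\sqrt b}{\sqrt c}\\ \frac{\sqrt c}{\sqrt b}&0\end{pmatrix}$, $G=\begin{pmatrix}-1&0\\0&1\end{pmatrix}$, where $b,c\in\mathbb{C}^*$. \item[(3)] $\zeta'_3$: $S=\begin{pmatrix}0&b\\ c&0\end{pmatrix}$, $R=\begin{pmatrix}0&-\frac{\sqrt b}{\sqrt c}\\ -\frac{\sqrt c}{\sqrt b}&0\end{pmatrix}$, $G=I_2$ (so $\zeta'_3(\gamma_j)=I_{n+1}$), where $b,c\in\mathbb{C}^*$. \item[(4)] $\zeta'_4$: $S=\begin{pmatrix}0&b\\ c&0\end{pmatrix}$,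 $R=\begin{pmatrix}0&\frac{\sqrt b}{\sqrt c}\\ \frac{\sqrt c}{\sqrt b}&0\end{pmatrix}$, $G=I_2$, where $b,c\in\mathbb{C}^*$. \item[(5)] $\zeta'_5$: $S=I_2$ (so $\zeta'_5(\sigma_i)=I_{n+1}$), $R=\begin{pmatrix}0&x\\ \frac1x&0\end{pmatrix}$, $G=\begin{pmatrix}-1&0\\0&1\end{pmatrix}$, where $x\in\mathbb{C}^*$. \item[(6)] $\zeta'_6$: $S=I_2$, $R=\begin{pmatrix}0&x\\ \frac1x&0\end{pmatrix}$, $G=I_2$, where $x\in\mathbb{C}^*$. \item[(7)] $\zeta'_7$: $S=R=G=I_2$, i.e. $\zeta'_7(\sigma_i)=\zeta'_7(\rho_i)=\zeta'_7(\gamma_j)=I_{n+1}$. \end{itemize} Here $\mathbb{C}^*=\mathbb{C}\setminus\{0\}$ and $\sqrt b,\sqrt c$ denote square roots of $b,c$.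
   Context: For $n\ge 2$, the twisted virtual braid group $\mathrm{TVB}_n$ is the group with generators $\sigma_1,\dots,\sigma_{n-1}$, $\rho_1,\dots,\rho_{n-1}$, $\gamma_1,\dots,\gamma_n$ and defining relations: $\sigma_i\sigma_{i+1}\sigma_i=\sigma_{i+1}\sigma_i\sigma_{i+1}$ ($1\le i\le n-2$); $\sigma_i\sigma_j=\sigma_j\sigma_i$ ($|i-j|\ge2$); $\rho_i^2=1$; $\rho_i\rho_j=\rho_j\rho_i$ ($|i-j|\ge 2$); $\rho_i\rho_{i+1}\rho_i=\rho_{i+1}\rho_i\rho_{i+1}$ ($1\le i\le n-2$); $\sigma_i\rho_j=\rho_j\sigma_i$ ($|i-j|\ge 2$); $\rho_i\rho_{i+1}\sigma_i=\sigma_{i+1}\rho_i\rho_{i+1}$ ($1\le i\le n-2$); $\gamma_i^2=1$ ($1\le i\le n$); $\gamma_i\gamma_j=\gamma_j\gamma_i$ (all $i,j$); $\gamma_j\rho_i=\rho_i\gamma_j$ and $\gamma_j\sigma_i=\sigma_i\gamma_j$ ($|i-j|\ge 2$); $\rho_i\gamma_i=\gamma_{i+1}\rho_i$ ($1\le i\le n-1$); $\rho_i\sigma_i\rho_i=\gamma_{i+1}\gamma_i\sigma_i\gamma_i\gamma_{i+1}$ ($1\le i\le n-1$). For a $2\times2$ matrix $M$ and $1\le i\le n$, let $L_i(M)$ be the $(n+1)\times(n+1)$ block-diagonal matrix $\mathrm{diag}(I_{i-1},M,I_{n-i})$. A complex homogeneous local representation $\zeta':\mathrm{TVB}_n\to\mathrm{GL}_{n+1}(\mathbb{C})$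 is a group homomorphism such that there exist $S,R,G\in\mathrm{GL}_2(\mathbb{C})$ with $\zeta'(\sigma_i)=L_i(S)$, $\zeta'(\rho_i)=L_i(R)$ for all $1\le i\le n-1$, and $\zeta'(\gamma_j)=L_j(G)$ for all $1\le j\le n$. Two representations are equivalent if they are conjugate by a fixed invertible matrix. *)

theory Defs
  imports Complex_Main "Jordan_Normal_Form.Matrix"
begin

definition mat2 :: "complex \<Rightarrow> complex \<Rightarrow> complex \<Rightarrow> complex \<Rightarrow> complex mat" where
  "mat2 a b c d = mat_of_rows_list 2 [[a, b], [c, d]]"

text \<open>L n i M = diag(I_(i-1), M, I_(n-i)), an (n+1)x(n+1) matrix; i is 1-based,
  so M occupies the (0-based) rows/columns i-1 and i.\<close>
definition Lmat :: "nat \<Rightarrow> nat \<Rightarrow> complex mat \<Rightarrow> complex mat" where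
  "Lmat n i M = mat (n+1) (n+1) (\<lambda>(r, c).
     if (r = i - 1 \<or> r = i) \<and> (c = i - 1 \<or> c = i) then M $$ (r - (i - 1), c - (i - 1))
     else if r = c then 1 else 0)"

text \<open>(S,R,G) in GL_2(C) define a homogeneous local representation of TVB_n, i.e. the
  assignment sigma_i |-> L_i(S), rho_i |-> L_i(R), gamma_j |-> L_j(G) respects all defining
  relations of TVB_n (equivalently, by von Dyck, extends to a group homomorphism).\<close>
definition homog_local_rep :: "nat \<Rightarrow> complex mat \<Rightarrow> complex mat \<Rightarrow> complex mat \<Rightarrow> bool" where
  "homog_local_rep n S R G \<longleftrightarrow>
     S \<in> carrier_mat 2 2 \<and> R \<in> carrier_mat 2 2 \<and> G \<in> carrier_mat 2 2 \<and>
     invertible_mat S \<and> invertible_mat R \<and> invertible_mat G \<and>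
     (let A = (\<lambda>i. Lmat n i S); B = (\<lambda>i. Lmat n i R); C = (\<lambda>j. Lmat n j G);
          I = (1\<^sub>m (n+1) :: complex mat) in
     (\<forall>i. 1 \<le> i \<and> i \<le> n - 2 \<longrightarrow> A i * A (i+1) * A i = A (i+1) * A i * A (i+1)) \<and>
     (\<forall>i j. 1 \<le> i \<and> i \<le> n - 1 \<and> 1 \<le> j \<and> j \<le> n - 1 \<and> (i + 2 \<le> j \<or> j + 2 \<le> i)
          \<longrightarrow> A i * A j = A j * A i) \<and>
     (\<forall>i. 1 \<le> i \<and> i \<le> n - 1 \<longrightarrow> B i * B i = I) \<and>
     (\<forall>i j. 1 \<le> i \<and> i \<le> n - 1 \<and> 1 \<le> j \<and> j \<le> n - 1 \<and> (i + 2 \<le> j \<or> j + 2 \<le> i)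
          \<longrightarrow> B i * B j = B j * B i) \<and>
     (\<forall>i. 1 \<le> i \<and> i \<le> n - 2 \<longrightarrow> B i * B (i+1) * B i = B (i+1) * B i * B (i+1)) \<and>
     (\<forall>i j. 1 \<le> i \<and> i \<le> n - 1 \<and> 1 \<le> j \<and> j \<le> n - 1 \<and> (i + 2 \<le> j \<or> j + 2 \<le> i)
          \<longrightarrow> A i * B j = B j * A i) \<and>
     (\<forall>i. 1 \<le> i \<and> i \<le> n - 2 \<longrightarrow> B i * B (i+1) * A i = A (i+1) * B i * B (i+1)) \<and>
     (\<forall>i. 1 \<le> i \<and> i \<le> n \<longrightarrow> C i * C i = I) \<and>
     (\<forall>i j. 1 \<le> i \<and> i \<le> n \<and> 1 \<le> j \<and> j \<le> n \<longrightarrow> C i * C j = C j * C i) \<and>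
     (\<forall>i j. 1 \<le> i \<and> i \<le> n - 1 \<and> 1 \<le> j \<and> j \<le> n \<and> (i + 2 \<le> j \<or> j + 2 \<le> i)
          \<longrightarrow> C j * B i = B i * C j \<and> C j * A i = A i * C j) \<and>
     (\<forall>i. 1 \<le> i \<and> i \<le> n - 1 \<longrightarrow> B i * C i = C (i+1) * B i) \<and>
     (\<forall>i. 1 \<le> i \<and> i \<le> n - 1 \<longrightarrow> B i * A i * B i = C (i+1) * C i * A i * C i * C (i+1)))"

text \<open>Equivalence: conjugate by a fixed invertible (n+1)x(n+1) matrix P (with inverse Q);
  a homomorphism on TVB_n is determined by its values on generators.\<close>
definition equiv_hlr :: "nat \<Rightarrow> complex mat \<Rightarrow> complex mat \<Rightarrow> complex mat \<Rightarrow>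
    complex mat \<Rightarrow> complex mat \<Rightarrow> complex mat \<Rightarrow> bool" where
  "equiv_hlr n S R G S' R' G' \<longleftrightarrow>
     (\<exists>P Q. P \<in> carrier_mat (n+1) (n+1) \<and> Q \<in> carrier_mat (n+1) (n+1) \<and>
        P * Q = 1\<^sub>m (n+1) \<and> Q * P = 1\<^sub>m (n+1) \<and>
        (\<forall>i. 1 \<le> i \<and> i \<le> n - 1 \<longrightarrow>
             Lmat n i S = P * Lmat n i S' * Q \<and> Lmat n i R = P * Lmat n i R' * Q) \<and>
        (\<forall>j. 1 \<le> j \<and> j \<le> n \<longrightarrow> Lmat n j G = P * Lmat n j G' * Q))"

end

theory Submission
  imports Defs
begin

lemma mult_entry:
  assumes "X \<in> carrier_mat m m" "Y \<in> carrier_mat m m" "r < m" "c < m"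
  shows "(X*Y)$$(r,c) = (\<Sum>k<m. X$$(r,k)*Y$$(k,c))"
  using assms by (auto simp: index_mult_mat scalar_prod_def lessThan_atLeast0 intro!: sum.cong)

definition blk :: "nat \<Rightarrow> complex mat \<Rightarrow> bool" where
  "blk n X \<longleftrightarrow> X \<in> carrier_mat (n+1) (n+1) \<and>
     (\<forall>r c. r < n+1 \<longrightarrow> c < n+1 \<longrightarrow> (3 \<le> r \<or> 3 \<le> c) \<longrightarrow> r \<noteq> c \<longrightarrow> X$$(r,c) = 0)"

lemma blk_mult:
  assumes "blk n X" "blk n Y" shows "blk n (X*Y)"
  unfolding blk_def
proof (intro conjI allI impI)
  show "X*Y \<in> carrier_mat (n+1) (n+1)" using assms unfolding blk_def by auto
  fix r c assume h: "r < n+1" "c < n+1" "3 \<le> r \<or> 3 \<le> c" "r \<noteq> c"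
  have "(X*Y)$$(r,c) = (\<Sum>k<n+1. X$$(r,k)*Y$$(k,c))"
    using assms h unfolding blk_def by (intro mult_entry) auto
  also have "\<dots> = 0"
  proof (intro sum.neutral ballI)
    fix k assume k: "k \<in> {..<n+1}"
    show "X$$(r,k)*Y$$(k,c) = 0"
    proof (cases "3 \<le> r")
      case True
      then show ?thesis using assms h k unfolding blk_def
        by (cases "k = r") auto
    next
      case False
      then have "3 \<le> c" using h by auto
      then show ?thesis using assms h k unfolding blk_def
        by (cases "k = c") auto
    qed
  qed
  finally show "(X*Y)$$(r,c) = 0" .
qed

lemma blk_entry:
  assumes "blk n X" "blk n Y" "r < 3" "c < 3" "3 \<le> n"
  shows "(X*Y)$$(r,c) = X$$(r,0)*Y$$(0,c) + X$$(r,1)*Y$$(1,c) + X$$(r,2)*Y$$(2,c)"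
proof -
  have "(X*Y)$$(r,c) = (\<Sum>k<n+1. X$$(r,k)*Y$$(k,c))"
    using assms unfolding blk_def by (intro mult_entry) auto
  also have "\<dots> = (\<Sum>k<3. X$$(r,k)*Y$$(k,c))"
  proof (rule sum.mono_neutral_right)
    show "\<forall>k\<in>{..<n + 1} - {..<3}. X $$ (r, k) * Y $$ (k, c) = 0"
      using assms unfolding blk_def by auto
  qed (use assms in auto)
  also have "\<dots> = X$$(r,0)*Y$$(0,c) + X$$(r,1)*Y$$(1,c) + X$$(r,2)*Y$$(2,c)"
    by (simp add: eval_nat_numeral)
  finally show ?thesis .
qed

lemma blk_Lmat: assumes "i \<in> {1,2}" shows "blk n (Lmat n i M)"
  using assms unfolding blk_def Lmat_def by auto

lemma Lmat_entry: "r < n+1 \<Longrightarrow> c < n+1 \<Longrightarrow> Lmat n i M $$ (r,c) =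
     (if (r = i - 1 \<or> r = i) \<and> (c = i - 1 \<or> c = i) then M $$ (r - (i - 1), c - (i - 1))
     else if r = c then 1 else 0)"
  unfolding Lmat_def by simp

lemma Lmat_entry3: "3 \<le> n \<Longrightarrow> r < 3 \<Longrightarrow> c < 3 \<Longrightarrow> Lmat n i M $$ (r,c) =
     (if (r = i - 1 \<or> r = i) \<and> (c = i - 1 \<or> c = i) then M $$ (r - (i - 1), c - (i - 1))
     else if r = c then 1 else 0)"
  unfolding Lmat_def by simp
lemma one_entry3: "3 \<le> n \<Longrightarrow> r < 3 \<Longrightarrow> c < 3 \<Longrightarrow> 1\<^sub>m (Suc n) $$ (r,c) = (if r = c then 1 else 0)"
  by simp
lemma blk_L1: "blk n (Lmat n 1 M)" by (rule blk_Lmat) simp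
lemma blk_L2: "blk n (Lmat n 2 M)" by (rule blk_Lmat) simp
lemma blk_L1s: "blk n (Lmat n (Suc 0) M)" by (rule blk_Lmat) simp
lemma mat2_idx[simp]: "mat2 a b c d $$ (0,0) = a" "mat2 a b c d $$ (0,1) = b"
  "mat2 a b c d $$ (1,0) = c" "mat2 a b c d $$ (1,1) = d"
  "mat2 a b c d $$ (0,Suc 0) = b"
  "mat2 a b c d $$ (Suc 0,0) = c" "mat2 a b c d $$ (Suc 0,Suc 0) = d"
  "dim_row (mat2 a b c d) = 2" "dim_col (mat2 a b c d) = 2"
  by (simp_all add: mat2_def mat_of_rows_list_def)

lemma mat2_carrier: "M \<in> carrier_mat 2 2 \<Longrightarrow> M = mat2 (M$$(0,0)) (M$$(0,1)) (M$$(1,0)) (M$$(1,1))"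
  by (rule eq_matI) (auto simp: less_2_cases_iff)

lemma one2: "1\<^sub>m 2 = mat2 1 0 0 1"
  by (rule eq_matI) (auto simp: less_2_cases_iff)

lemma inv_row:
  assumes "invertible_mat (mat2 a b c d)"
  shows "a = 0 \<Longrightarrow> b = 0 \<Longrightarrow> False" "c = 0 \<Longrightarrow> d = 0 \<Longrightarrow> False"
proof -
  obtain B where B1: "mat2 a b c d * B = 1\<^sub>m 2" and B2: "B * mat2 a b c d = 1\<^sub>m (dim_row B)"
    using assms unfolding invertible_mat_def inverts_mat_def by auto
  have dB: "dim_row B = 2" using arg_cong[OF B2, of dim_col] by simp
  have dC: "dim_col B = 2" using arg_cong[OF B1, of dim_col] by simp
  have e0: "a * B$$(0,0) + b * B$$(1,0) = 1"
    using arg_cong[OF B1, of "\<lambda>M. M$$(0,0)"] dB dC by (simp add: index_mult_mat scalar_prod_def eval_nat_numeral)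
  have e1: "c * B$$(0,1) + d * B$$(1,1) = 1"
    using arg_cong[OF B1, of "\<lambda>M. M$$(1,1)"] dB dC by (simp add: index_mult_mat scalar_prod_def eval_nat_numeral)
  show "a = 0 \<Longrightarrow> b = 0 \<Longrightarrow> False" using e0 by simp
  show "c = 0 \<Longrightarrow> d = 0 \<Longrightarrow> False" using e1 by simp
qed

lemma Lmat_carrier: "Lmat n i M \<in> carrier_mat (n+1) (n+1)"
  unfolding Lmat_def by simp

lemma equiv_refl: "equiv_hlr n S R G S R G"
  unfolding equiv_hlr_def
  by (rule exI[of _ "1\<^sub>m (n+1)"], rule exI[of _ "1\<^sub>m (n+1)"]) (simp add: Lmat_carrier left_mult_one_mat[OF Lmat_carrier] right_mult_one_mat[OF Lmat_carrier] del: One_nat_def)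

theorem theorem3p4:
  fixes n :: nat and S R G :: "complex mat"
  assumes "n \<ge> 3" and "homog_local_rep n S R G"
  shows "(\<exists>b c sb sc. b \<noteq> 0 \<and> c \<noteq> 0 \<and> sb^2 = b \<and> sc^2 = c \<and>
            equiv_hlr n S R G (mat2 0 b c 0) (mat2 0 (-(sb/sc)) (-(sc/sb)) 0) (mat2 (-1) 0 0 1))
       \<or> (\<exists>b c sb sc. b \<noteq> 0 \<and> c \<noteq> 0 \<and> sb^2 = b \<and> sc^2 = c \<and>
            equiv_hlr n S R G (mat2 0 b c 0) (mat2 0 (sb/sc) (sc/sb) 0) (mat2 (-1) 0 0 1))
       \<or> (\<exists>b c sb sc. b \<noteq> 0 \<and> c \<noteq> 0 \<and> sb^2 = b \<and> sc^2 = c \<and>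
            equiv_hlr n S R G (mat2 0 b c 0) (mat2 0 (-(sb/sc)) (-(sc/sb)) 0) (1\<^sub>m 2))
       \<or> (\<exists>b c sb sc. b \<noteq> 0 \<and> c \<noteq> 0 \<and> sb^2 = b \<and> sc^2 = c \<and>
            equiv_hlr n S R G (mat2 0 b c 0) (mat2 0 (sb/sc) (sc/sb) 0) (1\<^sub>m 2))
       \<or> (\<exists>x. x \<noteq> 0 \<and> equiv_hlr n S R G (1\<^sub>m 2) (mat2 0 x (1/x) 0) (mat2 (-1) 0 0 1))
       \<or> (\<exists>x. x \<noteq> 0 \<and> equiv_hlr n S R G (1\<^sub>m 2) (mat2 0 x (1/x) 0) (1\<^sub>m 2))
       \<or> equiv_hlr n S R G (1\<^sub>m 2) (1\<^sub>m 2) (1\<^sub>m 2)"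
proof -
  note n = assms(1)
  note h = assms(2)
  let ?A = "\<lambda>i. Lmat n i S" and ?B = "\<lambda>i. Lmat n i R" and ?C = "\<lambda>i. Lmat n i G"
  have i1: "1 \<le> (1::nat) \<and> (1::nat) \<le> n - 2" "1 \<le> (1::nat) \<and> (1::nat) \<le> n - 1" "1 \<le> (1::nat) \<and> (1::nat) \<le> n" using n by auto
  note H = h[unfolded homog_local_rep_def Let_def]
  have Sbr: "?A 1 * ?A 2 * ?A 1 = ?A 2 * ?A 1 * ?A 2"
  proof - have "\<forall>i. 1 \<le> i \<and> i \<le> n - 2 \<longrightarrow> ?A i * ?A (i+1) * ?A i = ?A (i+1) * ?A i * ?A (i+1)" using H by (elim conjE) assumption
    from spec[OF this, of 1] i1 show ?thesis by (simp add: numeral_2_eq_2) qed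
  have RR: "?B 1 * ?B 1 = 1\<^sub>m (n+1)"
  proof - have "\<forall>i. 1 \<le> i \<and> i \<le> n - 1 \<longrightarrow> ?B i * ?B i = 1\<^sub>m (n+1)" using H by (elim conjE) assumption
    from spec[OF this, of 1] i1 show ?thesis by (simp add: numeral_2_eq_2) qed
  have Rbr: "?B 1 * ?B 2 * ?B 1 = ?B 2 * ?B 1 * ?B 2"
  proof - have "\<forall>i. 1 \<le> i \<and> i \<le> n - 2 \<longrightarrow> ?B i * ?B (i+1) * ?B i = ?B (i+1) * ?B i * ?B (i+1)" using H by (elim conjE) assumption
    from spec[OF this, of 1] i1 show ?thesis by (simp add: numeral_2_eq_2) qed
  have mix: "?B 1 * ?B 2 * ?A 1 = ?A 2 * ?B 1 * ?B 2"
  proof - have "\<forall>i. 1 \<le> i \<and> i \<le> n - 2 \<longrightarrow> ?B i * ?B (i+1) * ?A i = ?A (i+1) * ?B i * ?B (i+1)" using H by (elim conjE) assumption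
    from spec[OF this, of 1] i1 show ?thesis by (simp add: numeral_2_eq_2) qed
  have GG: "?C 1 * ?C 1 = 1\<^sub>m (n+1)"
  proof - have "\<forall>i. 1 \<le> i \<and> i \<le> n \<longrightarrow> ?C i * ?C i = 1\<^sub>m (n+1)" using H by (elim conjE) assumption
    from spec[OF this, of 1] i1 show ?thesis by (simp add: numeral_2_eq_2) qed
  have BC: "?B 1 * ?C 1 = ?C 2 * ?B 1"
  proof - have "\<forall>i. 1 \<le> i \<and> i \<le> n - 1 \<longrightarrow> ?B i * ?C i = ?C (i+1) * ?B i" using H by (elim conjE) assumption
    from spec[OF this, of 1] i1 show ?thesis by (simp add: numeral_2_eq_2) qed
  have last: "?B 1 * ?A 1 * ?B 1 = ?C 2 * ?C 1 * ?A 1 * ?C 1 * ?C 2"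
  proof - have "\<forall>i. 1 \<le> i \<and> i \<le> n - 1 \<longrightarrow> ?B i * ?A i * ?B i = ?C (i+1) * ?C i * ?A i * ?C i * ?C (i+1)" using H by (elim conjE) assumption
    from spec[OF this, of 1] i1 show ?thesis by (simp add: numeral_2_eq_2) qed
  have cS: "S \<in> carrier_mat 2 2" and cR: "R \<in> carrier_mat 2 2" and cG: "G \<in> carrier_mat 2 2"
    and iS: "invertible_mat S" using h unfolding homog_local_rep_def by auto
  obtain s1 s2 s3 s4 where S: "S = mat2 s1 s2 s3 s4" using mat2_carrier[OF cS] by blast
  obtain r1 r2 r3 r4 where R: "R = mat2 r1 r2 r3 r4" using mat2_carrier[OF cR] by blast
  obtain g1 g2 g3 g4 where G: "G = mat2 g1 g2 g3 g4" using mat2_carrier[OF cG] by blast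
  note simps = blk_entry[of n] blk_mult blk_L1 blk_L1s blk_L2 Lmat_entry3[OF n] one_entry3[OF n] n S R G
  note simps[simp]
  have "(?B 1 * ?C 1) $$ (1,2) = (?C 2 * ?B 1) $$ (1,2)" "(?B 1 * ?C 1) $$ (2,0) = (?C 2 * ?B 1) $$ (2,0)"
     "(?B 1 * ?C 1) $$ (2,1) = (?C 2 * ?B 1) $$ (2,1)" "(?B 1 * ?C 1) $$ (2,2) = (?C 2 * ?B 1) $$ (2,2)"
     "(?B 1 * ?C 1) $$ (0,0) = (?C 2 * ?B 1) $$ (0,0)" "(?B 1 * ?C 1) $$ (1,1) = (?C 2 * ?B 1) $$ (1,1)"
    using BC by auto
  note bc = this[simplified]
  have "(?C 1 * ?C 1) $$ (0,0) = 1\<^sub>m (n+1) $$ (0,0)" using GG by auto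
  note gg = this[simplified]
  have "(?B 1 * ?B 1) $$ (0,0) = 1\<^sub>m (n+1) $$ (0,0)" "(?B 1 * ?B 1) $$ (0,1) = 1\<^sub>m (n+1) $$ (0,1)"
    "(?B 1 * ?B 1) $$ (1,0) = 1\<^sub>m (n+1) $$ (1,0)" "(?B 1 * ?B 1) $$ (1,1) = 1\<^sub>m (n+1) $$ (1,1)" using RR by auto
  note rr = this[simplified]
  have "(?B 1 * ?B 2 * ?B 1) $$ (0,0) = (?B 2 * ?B 1 * ?B 2) $$ (0,0)" "(?B 1 * ?B 2 * ?B 1) $$ (0,1) = (?B 2 * ?B 1 * ?B 2) $$ (0,1)"
    "(?B 1 * ?B 2 * ?B 1) $$ (1,1) = (?B 2 * ?B 1 * ?B 2) $$ (1,1)" using Rbr by auto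
  note rbr = this[simplified]
  have "(?A 1 * ?A 2 * ?A 1) $$ (0,0) = (?A 2 * ?A 1 * ?A 2) $$ (0,0)" "(?A 1 * ?A 2 * ?A 1) $$ (0,1) = (?A 2 * ?A 1 * ?A 2) $$ (0,1)"
    using Sbr by auto
  note sbr = this[simplified]
  have "(?B 1 * ?B 2 * ?A 1) $$ (0,0) = (?A 2 * ?B 1 * ?B 2) $$ (0,0)" "(?B 1 * ?B 2 * ?A 1) $$ (0,1) = (?A 2 * ?B 1 * ?B 2) $$ (0,1)"
    "(?B 1 * ?B 2 * ?A 1) $$ (1,0) = (?A 2 * ?B 1 * ?B 2) $$ (1,0)" "(?B 1 * ?B 2 * ?A 1) $$ (1,1) = (?A 2 * ?B 1 * ?B 2) $$ (1,1)"
    using mix by auto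
  note mx = this[simplified]
  have "(?B 1 * ?A 1 * ?B 1) $$ (0,0) = (?C 2 * ?C 1 * ?A 1 * ?C 1 * ?C 2) $$ (0,0)"
    "(?B 1 * ?A 1 * ?B 1) $$ (0,1) = (?C 2 * ?C 1 * ?A 1 * ?C 1 * ?C 2) $$ (0,1)"
    "(?B 1 * ?A 1 * ?B 1) $$ (1,0) = (?C 2 * ?C 1 * ?A 1 * ?C 1 * ?C 2) $$ (1,0)"
    "(?B 1 * ?A 1 * ?B 1) $$ (1,1) = (?C 2 * ?C 1 * ?A 1 * ?C 1 * ?C 2) $$ (1,1)"
    using last by auto
  note ls = this[simplified]
  have iS2: "invertible_mat (mat2 s1 s2 s3 s4)" using iS S by simp
  note bc gg rr rbr sbr mx ls
  have g2: "g2 = 0" and g4: "g4 = 1" using bc by auto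
  have g3: "g3 = 0"
  proof (rule ccontr)
    assume "g3 \<noteq> 0"
    then have "r3 = 0" "r4 = 0" using bc by auto
    then show False using rr by simp
  qed
  have g1sq: "g1 * g1 = 1" using gg g2 g3 by simp
  have g1c: "g1 = 1 \<or> g1 = -1"
  proof -
    have "(g1 - 1) * (g1 + 1) = 0" using g1sq by (simp add: algebra_simps)
    then show ?thesis by (auto simp: add_eq_0_iff2)
  qed
  have l1: "r1 * g1 = r1" "r4 = g1 * r4" using bc g2 g3 g4 by simp_all
  have ls': "(r1 * s1 + r2 * s3) * r1 + (r1 * s2 + r2 * s4) * r3 = s1"
     "(r1 * s1 + r2 * s3) * r2 + (r1 * s2 + r2 * s4) * r4 = s2"
    using ls g2 g3 g4 g1sq by (simp_all add: algebra_simps)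
  have Gform: "(g1 = -1 \<and> G = mat2 (-1) 0 0 1) \<or> (g1 = 1 \<and> G = 1\<^sub>m 2)"
    using g1c G g2 g3 g4 one2 by auto
  have RI_or_A: "(g1 = 1 \<and> r1 = 1 \<and> r2 = 0 \<and> r3 = 0 \<and> r4 = 1) \<or> (r1 = 0 \<and> r4 = 0)"
  proof (cases "r1 = 0 \<and> r4 = 0")
    case True then show ?thesis by simp
  next
    case nA: False
    have g1one: "g1 = 1"
    proof (rule ccontr)
      assume "g1 \<noteq> 1" then have "g1 = -1" using g1c by simp
      then have "r1 = 0" "r4 = 0" using l1 by auto
      then show False using nA by simp
    qed
    have sqa: "r1 * r1 = 1 - r2 * r3" using rr(1) by (simp add: eq_diff_eq)
    have sqb: "r4 * r4 = 1 - r2 * r3" using rr(4) by (simp add: eq_diff_eq mult.commute add.commute)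
    have sq: "r1 * r1 = r4 * r4" using sqa sqb by simp
    have "r1 + r4 \<noteq> 0"
    proof
      assume "r1 + r4 = 0" then have r4: "r4 = - r1" by (simp add: add_eq_0_iff2)
      have "r1 = 0" using rbr r4 by auto
      then show False using nA r4 by simp
    qed
    moreover have "(r1 + r4) * r2 = 0" "(r1 + r4) * r3 = 0" using rr by (simp_all add: algebra_simps)
    ultimately have r23: "r2 = 0" "r3 = 0" by auto
    then have "r1 * r1 = 1" "r4 * r4 = 1" using rr by simp_all
    then have "r1 = 1" using rbr r23 by auto
    moreover have "(r4 - 1) * (r4 + 1) = 0" using \<open>r4 * r4 = 1\<close> by (simp add: algebra_simps)
    ultimately have "r4 = 1" using \<open>r1 + r4 \<noteq> 0\<close> by (auto simp: add_eq_0_iff2)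
    then show ?thesis using g1one \<open>r1 = 1\<close> r23 by simp
  qed
  show ?thesis
  proof (cases "r1 = 0 \<and> r4 = 0")
    case False
    then have RI: "g1 = 1" "r1 = 1" "r2 = 0" "r3 = 0" "r4 = 1" using RI_or_A by auto
    have "s1 = 1" "s2 = 0" "s3 = 0" "s4 = 1" using mx RI by auto
    then have eqs: "S = 1\<^sub>m 2" "R = 1\<^sub>m 2" "G = 1\<^sub>m 2" using S R G RI g2 g3 g4 one2 by auto
    have "equiv_hlr n S R G (1\<^sub>m 2) (1\<^sub>m 2) (1\<^sub>m 2)"
      using equiv_refl[of n S R G] unfolding eqs .
    then show ?thesis by blast
  next
    case True
    then have r14: "r1 = 0" "r4 = 0" by auto
    have r23: "r2 * r3 = 1" using rr r14 by (simp add: mult.commute)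
    have r2nz: "r2 \<noteq> 0" using r23 by auto
    have r3e: "r3 = 1 / r2" using r23 r2nz by (simp add: field_simps mult.commute)
    have "s1 = (r2 * r3) * s4" using ls'(1) r14 by (simp add: mult_ac)
    then have s41: "s4 = s1" using r23 by simp
    have s23: "s2 = r2 * r2 * s3" using ls'(2) r14 by (simp add: algebra_simps)
    show ?thesis
    proof (cases "s1 = 0")
      case True
      have s2nz: "s2 \<noteq> 0" using inv_row(1)[OF iS2] True by blast
      have s3nz: "s3 \<noteq> 0" using inv_row(2)[OF iS2] True s41 by blast
      define sc where "sc = csqrt s3"
      define sb where "sb = r2 * sc"
      have scnz: "sc \<noteq> 0" using s3nz unfolding sc_def by simp
      have sc2: "sc^2 = s3" unfolding sc_def by simp
      have sb2: "sb^2 = s2" unfolding sb_def using sc2 s23 by (simp add: power2_eq_square algebra_simps)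
      have q1: "sb / sc = r2" unfolding sb_def using scnz by simp
      have q2: "sc / sb = r3" unfolding sb_def using scnz r2nz r3e by simp
      have eqS: "S = mat2 0 s2 s3 0" using S True s41 by simp
      have eqR: "R = mat2 0 (sb/sc) (sc/sb) 0" using R r14 q1 q2 by simp
      from Gform show ?thesis
      proof
        assume "g1 = -1 \<and> G = mat2 (-1) 0 0 1"
        then have eqG: "G = mat2 (-1) 0 0 1" by (rule conjunct2)
        have "equiv_hlr n S R G (mat2 0 s2 s3 0) (mat2 0 (sb/sc) (sc/sb) 0) (mat2 (-1) 0 0 1)"
          using equiv_refl[of n S R G] unfolding eqS eqR eqG .
        then show ?thesis using s2nz s3nz sb2 sc2 apply - apply (rule disjI2, rule disjI1) by (intro exI[of _ s2] exI[of _ s3] exI[of _ sb] exI[of _ sc] conjI)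
      next
        assume "g1 = 1 \<and> G = 1\<^sub>m 2"
        then have eqG: "G = 1\<^sub>m 2" by (rule conjunct2)
        have "equiv_hlr n S R G (mat2 0 s2 s3 0) (mat2 0 (sb/sc) (sc/sb) 0) (1\<^sub>m 2)"
          using equiv_refl[of n S R G] unfolding eqS eqR eqG .
        then show ?thesis using s2nz s3nz sb2 sc2 apply - apply (rule disjI2, rule disjI2, rule disjI2, rule disjI1) by (intro exI[of _ s2] exI[of _ s3] exI[of _ sb] exI[of _ sc] conjI)
      qed
    next
      case False
      then have "s2 = 0" using sbr s41 by auto
      then have "s3 = 0" using s23 r2nz by simp
      then have "s1 = 1" using sbr False \<open>s2 = 0\<close> by auto
      then have eqS: "S = 1\<^sub>m 2" using S s41 \<open>s2 = 0\<close> \<open>s3 = 0\<close> one2 by simp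
      have eqR: "R = mat2 0 r2 (1/r2) 0" using R r14 r3e by simp
      from Gform show ?thesis
      proof
        assume "g1 = -1 \<and> G = mat2 (-1) 0 0 1"
        then have eqG: "G = mat2 (-1) 0 0 1" by (rule conjunct2)
        have "equiv_hlr n S R G (1\<^sub>m 2) (mat2 0 r2 (1/r2) 0) (mat2 (-1) 0 0 1)"
          using equiv_refl[of n S R G] unfolding eqS eqR eqG .
        then show ?thesis using r2nz apply - apply (rule disjI2, rule disjI2, rule disjI2, rule disjI2, rule disjI1) by (intro exI[of _ r2] conjI)
      next
        assume "g1 = 1 \<and> G = 1\<^sub>m 2"
        then have eqG: "G = 1\<^sub>m 2" by (rule conjunct2)
        have "equiv_hlr n S R G (1\<^sub>m 2) (mat2 0 r2 (1/r2) 0) (1\<^sub>m 2)"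
          using equiv_refl[of n S R G] unfolding eqS eqR eqG .
        then show ?thesis using r2nz apply - apply (rule disjI2, rule disjI2, rule disjI2, rule disjI2, rule disjI2, rule disjI1) by (intro exI[of _ r2] conjI)
      qed
    qed
  qed
qed

end
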